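(* Let $\mathbb H^1$ be the first Heisenberg group equipped with a homogeneous distance. Then the topological group $\ell_1(\mathbb H^1)=\{(x_n)_n:x_n\in\mathbb H^1,\ \sum_nd(x_n,e)<\infty\}$, with componentwise multiplication and distance $\sum_nd(x_n,y_n)$, is not a Banach Lie group.
   Context: A homogeneous distance on $\mathbb H^1$ is a left-invariant distance inducing the manifold topology with $d(\delta_tp,\delta_tq)=|t|d(p,q)$ for the Carnot dilations $\delta_t$ of $\mathbb H^1$. *)

theory Defs
  imports "HOL-Analysis.Analysis"
begin

section \<open>The first Heisenberg group H^1 in exponential coordinates\<close>

type_synonym heis = "real \<times> real \<times> real"

definition heis_mult :: "heis \<Rightarrow> heis \<Rightarrow> heis" where
  "heis_mult p q = (case p of (x, y, t) \<Rightarrow> case q of (x', y', t') \<Rightarrow>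
      (x + x', y + y', t + t' + (x * y' - y * x') / 2))"

definition heis_inv :: "heis \<Rightarrow> heis" where
  "heis_inv p = (case p of (x, y, t) \<Rightarrow> (- x, - y, - t))"

definition heis_one :: heis where
  "heis_one = (0, 0, 0)"

definition heis_dil :: "real \<Rightarrow> heis \<Rightarrow> heis" where
  "heis_dil s p = (case p of (x, y, t) \<Rightarrow> (s * x, s * y, s\<^sup>2 * t))"

definition homogeneous_distance :: "(heis \<Rightarrow> heis \<Rightarrow> real) \<Rightarrow> bool" where
  "homogeneous_distance d \<longleftrightarrow>
     (\<forall>p q. d p q = 0 \<longleftrightarrow> p = q) \<and>
     (\<forall>p q. d p q = d q p) \<and>
     (\<forall>p q r. d p r \<le> d p q + d q r) \<and>
     (\<forall>g p q. d (heis_mult g p) (heis_mult g q) = d p q) \<and>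
     (\<forall>S. open S \<longleftrightarrow> (\<forall>p\<in>S. \<exists>r>0. \<forall>q. d p q < r \<longrightarrow> q \<in> S)) \<and>
     (\<forall>s p q. d (heis_dil s p) (heis_dil s q) = \<bar>s\<bar> * d p q)"

definition ell1 :: "(heis \<Rightarrow> heis \<Rightarrow> real) \<Rightarrow> (nat \<Rightarrow> heis) set" where
  "ell1 d = {x. summable (\<lambda>n. d (x n) heis_one)}"

definition ell1_dist :: "(heis \<Rightarrow> heis \<Rightarrow> real) \<Rightarrow> (nat \<Rightarrow> heis) \<Rightarrow> (nat \<Rightarrow> heis) \<Rightarrow> real" where
  "ell1_dist d x y = (\<Sum>n. d (x n) (y n))"

definition ell1_mult :: "(nat \<Rightarrow> heis) \<Rightarrow> (nat \<Rightarrow> heis) \<Rightarrow> (nat \<Rightarrow> heis)" where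
  "ell1_mult x y = (\<lambda>n. heis_mult (x n) (y n))"

definition ell1_inv :: "(nat \<Rightarrow> heis) \<Rightarrow> (nat \<Rightarrow> heis)" where
  "ell1_inv x = (\<lambda>n. heis_inv (x n))"

definition ell1_topology :: "(heis \<Rightarrow> heis \<Rightarrow> real) \<Rightarrow> (nat \<Rightarrow> heis) topology" where
  "ell1_topology d = topology (\<lambda>V. V \<subseteq> ell1 d \<and>
      (\<forall>x\<in>V. \<exists>r>0. \<forall>y\<in>ell1 d. ell1_dist d x y < r \<longrightarrow> y \<in> V))"

text \<open>D k x is the k-th Frechet derivative at x, seen as a k-linear map acting on the
  first k entries of h; it is required to be the derivative of D (k-1), and
  x \<mapsto> D k x is continuous in the operator norm (sup over the unit ball).\<close>
definition smooth_on :: "'a::real_normed_vector set \<Rightarrow> ('a \<Rightarrow> 'b::real_normed_vector) \<Rightarrow> bool" where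
  "smooth_on U f \<longleftrightarrow> open U \<and>
    (\<exists>D :: nat \<Rightarrow> 'a \<Rightarrow> (nat \<Rightarrow> 'a) \<Rightarrow> 'b.
      (\<forall>x\<in>U. \<forall>h. D 0 x h = f x) \<and>
      (\<forall>k. \<forall>x\<in>U. \<forall>h h'. (\<forall>i<k. h i = h' i) \<longrightarrow> D k x h = D k x h') \<and>
      (\<forall>k. \<forall>x\<in>U. \<forall>h. ((\<lambda>y. D k y h) has_derivative (\<lambda>v. D (Suc k) x (h(k := v)))) (at x)) \<and>
      (\<forall>k. \<forall>x\<in>U. \<forall>e>0. \<exists>\<delta>>0. \<forall>y\<in>U. dist y x < \<delta> \<longrightarrow>
          (\<forall>h. (\<forall>i<k. norm (h i) \<le> 1) \<longrightarrow> norm (D k y h - D k x h) \<le> e)))"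

definition banach_lie_group :: "'g topology \<Rightarrow> ('g \<Rightarrow> 'g \<Rightarrow> 'g) \<Rightarrow> ('g \<Rightarrow> 'g) \<Rightarrow> 'e::banach itself \<Rightarrow> bool" where
  "banach_lie_group T m i _ \<longleftrightarrow>
    (\<exists>A :: ('g set \<times> ('g \<Rightarrow> 'e)) set.
      (\<forall>(U, \<phi>)\<in>A. openin T U \<and> open (\<phi> ` U) \<and>
          homeomorphic_map (subtopology T U) (top_of_set (\<phi> ` U)) \<phi>) \<and>
      topspace T \<subseteq> \<Union>(fst ` A) \<and>
      (\<forall>(U, \<phi>)\<in>A. \<forall>(V, \<psi>)\<in>A. smooth_on (\<phi> ` (U \<inter> V)) (\<psi> \<circ> inv_into U \<phi>)) \<and>
      (\<forall>(U, \<phi>)\<in>A. \<forall>(V, \<psi>)\<in>A. \<forall>(W, \<theta>)\<in>A.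
         smooth_on {p \<in> \<phi> ` U \<times> \<psi> ` V. m (inv_into U \<phi> (fst p)) (inv_into V \<psi> (snd p)) \<in> W}
           (\<lambda>p. \<theta> (m (inv_into U \<phi> (fst p)) (inv_into V \<psi> (snd p))))) \<and>
      (\<forall>(U, \<phi>)\<in>A. \<forall>(V, \<psi>)\<in>A.
         smooth_on {a \<in> \<phi> ` U. i (inv_into U \<phi> a) \<in> V} (\<lambda>a. \<psi> (i (inv_into U \<phi> a)))))"

end

theory Submission
  imports Defs
begin


definition e0 :: "nat \<Rightarrow> heis" where "e0 = (\<lambda>_. heis_one)"
definition sing :: "nat \<Rightarrow> heis \<Rightarrow> nat \<Rightarrow> heis" where
  "sing n p = (\<lambda>k. if k = n then p else heis_one)"

lemma heis_mult_one_right[simp]: "heis_mult p heis_one = p"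
  by (cases p) (simp add: heis_mult_def heis_one_def)
lemma heis_mult_one_left[simp]: "heis_mult heis_one p = p"
  by (cases p) (simp add: heis_mult_def heis_one_def)

context fixes d :: "heis \<Rightarrow> heis \<Rightarrow> real" assumes hd: "homogeneous_distance d"
begin

lemmas hdu = hd[unfolded homogeneous_distance_def]
lemmas hd_parts = conjunct1[OF hdu] conjunct1[OF conjunct2[OF hdu]]
  conjunct1[OF conjunct2[OF conjunct2[OF hdu]]]
  conjunct1[OF conjunct2[OF conjunct2[OF conjunct2[OF hdu]]]]
  conjunct2[OF conjunct2[OF conjunct2[OF conjunct2[OF conjunct2[OF hdu]]]]]

lemma d_eq0: "d p q = 0 \<longleftrightarrow> p = q" using hd_parts(1) by blast
lemma d_zero[simp]: "d p p = 0" using d_eq0 by simp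
lemma d_sym: "d p q = d q p" using hd_parts(2) by blast
lemma d_tri: "d p r \<le> d p q + d q r" using hd_parts(3) by blast
lemma d_linv: "d (heis_mult g p) (heis_mult g q) = d p q" using hd_parts(4) by blast
lemma d_dil: "d (heis_dil s p) (heis_dil s q) = \<bar>s\<bar> * d p q" using hd_parts(5) by blast
lemma d_nonneg: "0 \<le> d p q"
  using d_tri[where p=p and q=q and r=p] d_sym[of q p] by simp

lemma d_mult_le: "d (heis_mult p q) heis_one \<le> d p heis_one + d q heis_one"
proof -
  have "d (heis_mult p q) heis_one \<le> d (heis_mult p q) (heis_mult p heis_one) + d p heis_one"
    using d_tri[where p="heis_mult p q" and q="heis_mult p heis_one" and r=heis_one] by simp
  also have "d (heis_mult p q) (heis_mult p heis_one) = d q heis_one" by (rule d_linv)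
  finally show ?thesis by simp
qed

lemma ell1_fin:
  assumes "\<And>k. k \<ge> K \<Longrightarrow> x k = heis_one"
  shows "x \<in> ell1 d" and "ell1_dist d e0 x = (\<Sum>k<K. d heis_one (x k))"
proof -
  have s: "(\<lambda>k. d (x k) heis_one) sums (\<Sum>k<K. d (x k) heis_one)"
    by (rule sums_finite) (use assms in auto)
  then show "x \<in> ell1 d" unfolding ell1_def by (auto simp: sums_iff)
  have "(\<lambda>k. d heis_one (x k)) sums (\<Sum>k<K. d heis_one (x k))"
    by (rule sums_finite) (use assms in auto)
  then show "ell1_dist d e0 x = (\<Sum>k<K. d heis_one (x k))"
    unfolding ell1_dist_def by (auto simp: sums_iff e0_def)
qed

lemma e0_in: "e0 \<in> ell1 d" using ell1_fin(1)[of 0 e0] by (simp add: e0_def)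

lemma sing_in: "sing n p \<in> ell1 d" by (rule ell1_fin(1)[of "Suc n"]) (auto simp: sing_def)
lemma sing_dist: "ell1_dist d e0 (sing n p) = d p heis_one"
proof -
  have "ell1_dist d e0 (sing n p) = (\<Sum>k<Suc n. d heis_one (sing n p k))"
    by (rule ell1_fin(2)) (auto simp: sing_def)
  also have "\<dots> = d heis_one p" by (simp add: sing_def)
  finally show ?thesis by (simp add: d_sym)
qed

lemma ell1_summ: assumes "x \<in> ell1 d" "y \<in> ell1 d"
  shows "summable (\<lambda>n. d (x n) (y n))"
proof (rule summable_comparison_test)
  show "\<exists>N. \<forall>n\<ge>N. norm (d (x n) (y n)) \<le> d (x n) heis_one + d (y n) heis_one"
  proof (intro exI[of _ 0] allI impI)
    fix n :: nat
    have a: "d (x n) (y n) \<le> d (x n) heis_one + d heis_one (y n)" by (rule d_tri)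
    have b: "d heis_one (y n) = d (y n) heis_one" by (rule d_sym)
    have c: "0 \<le> d (x n) (y n)" by (rule d_nonneg)
    show "norm (d (x n) (y n)) \<le> d (x n) heis_one + d (y n) heis_one" using a b c by simp
  qed
  show "summable (\<lambda>n. d (x n) heis_one + d (y n) heis_one)"
    using assms unfolding ell1_def by (simp add: summable_add)
qed

lemma ell1_tri: assumes "x \<in> ell1 d" "y \<in> ell1 d" "z \<in> ell1 d"
  shows "ell1_dist d x z \<le> ell1_dist d x y + ell1_dist d y z"
proof -
  have s1: "summable (\<lambda>n. d (x n) (z n))" by (rule ell1_summ[OF assms(1,3)])
  have s2: "summable (\<lambda>n. d (x n) (y n))" by (rule ell1_summ[OF assms(1,2)])
  have s3: "summable (\<lambda>n. d (y n) (z n))" by (rule ell1_summ[OF assms(2,3)])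
  have "ell1_dist d x z \<le> (\<Sum>n. d (x n) (y n) + d (y n) (z n))"
    unfolding ell1_dist_def
    by (rule suminf_le[OF _ s1 summable_add[OF s2 s3]]) (rule d_tri)
  also have "\<dots> = ell1_dist d x y + ell1_dist d y z"
    unfolding ell1_dist_def by (rule suminf_add[OF s2 s3, symmetric])
  finally show ?thesis .
qed

definition P1 :: "(nat \<Rightarrow> heis) set \<Rightarrow> bool" where
  "P1 V \<longleftrightarrow> V \<subseteq> ell1 d \<and> (\<forall>x\<in>V. \<exists>r>0. \<forall>y\<in>ell1 d. ell1_dist d x y < r \<longrightarrow> y \<in> V)"

lemma istop: "istopology P1"
  unfolding istopology_def
proof (intro conjI allI impI)
  fix S T assume "P1 S" "P1 T"
  then have S: "S \<subseteq> ell1 d \<and> (\<forall>x\<in>S. \<exists>r>0. \<forall>y\<in>ell1 d. ell1_dist d x y < r \<longrightarrow> y \<in> S)"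
    and T: "T \<subseteq> ell1 d \<and> (\<forall>x\<in>T. \<exists>r>0. \<forall>y\<in>ell1 d. ell1_dist d x y < r \<longrightarrow> y \<in> T)"
    unfolding P1_def by auto
  show "P1 (S \<inter> T)" unfolding P1_def
  proof (intro conjI ballI)
    show "S \<inter> T \<subseteq> ell1 d" using S by auto
    fix x assume "x \<in> S \<inter> T"
    then obtain r1 r2 where "r1 > 0" "r2 > 0" "\<forall>y\<in>ell1 d. ell1_dist d x y < r1 \<longrightarrow> y \<in> S"
      "\<forall>y\<in>ell1 d. ell1_dist d x y < r2 \<longrightarrow> y \<in> T" using S T by blast
    then show "\<exists>r>0. \<forall>y\<in>ell1 d. ell1_dist d x y < r \<longrightarrow> y \<in> S \<inter> T"
      by (intro exI[of _ "min r1 r2"]) auto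
  qed
next
  fix K :: "(nat \<Rightarrow> heis) set set"
  assume KK: "\<forall>S\<in>K. P1 S"
  show "P1 (\<Union>K)" unfolding P1_def
  proof (intro conjI ballI)
    show "\<Union>K \<subseteq> ell1 d" using KK unfolding P1_def by (meson Union_least)
    fix x assume "x \<in> \<Union>K"
    then obtain S where S: "S \<in> K" "x \<in> S" by (rule UnionE)
    then obtain r where "r > 0" "\<forall>y\<in>ell1 d. ell1_dist d x y < r \<longrightarrow> y \<in> S"
      using KK unfolding P1_def by meson
    then show "\<exists>r>0. \<forall>y\<in>ell1 d. ell1_dist d x y < r \<longrightarrow> y \<in> \<Union>K"
      using S(1) by (meson UnionI)
  qed
qed

lemma openin_ell1: "openin (ell1_topology d) V \<longleftrightarrow> P1 V"
proof -
  have "ell1_topology d = topology P1" unfolding ell1_topology_def P1_def by simp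
  then show ?thesis using istop by simp
qed

lemma topspace_ell1: "topspace (ell1_topology d) = ell1 d"
proof -
  have "P1 (ell1 d)" unfolding P1_def using zero_less_one by blast
  then have "openin (ell1_topology d) (ell1 d)" by (simp add: openin_ell1)
  then have a: "ell1 d \<subseteq> topspace (ell1_topology d)" by (rule openin_subset)
  have "openin (ell1_topology d) (topspace (ell1_topology d))" by (rule openin_topspace)
  then have "P1 (topspace (ell1_topology d))" by (simp only: openin_ell1)
  then have "topspace (ell1_topology d) \<subseteq> ell1 d" unfolding P1_def by (rule conjunct1)
  with a show ?thesis by (rule antisym[rotated])
qed

lemma ball_open: assumes "x \<in> ell1 d" shows "P1 {q \<in> ell1 d. ell1_dist d x q < \<rho>}"
  unfolding P1_def
proof (intro conjI ballI)
  fix q assume q: "q \<in> {q \<in> ell1 d. ell1_dist d x q < \<rho>}"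
  show "\<exists>r>0. \<forall>y\<in>ell1 d. ell1_dist d q y < r \<longrightarrow> y \<in> {q \<in> ell1 d. ell1_dist d x q < \<rho>}"
  proof (intro exI[of _ "\<rho> - ell1_dist d x q"] conjI ballI impI)
    show "0 < \<rho> - ell1_dist d x q" using q by auto
    fix y assume "y \<in> ell1 d" "ell1_dist d q y < \<rho> - ell1_dist d x q"
    then show "y \<in> {q \<in> ell1 d. ell1_dist d x q < \<rho>}"
      using ell1_tri[of x q y] assms q by auto
  qed
qed auto

end



lemma norm_pair_le: fixes a :: "'a::real_normed_vector" and b :: "'b::real_normed_vector"
  shows "norm (a, b) \<le> norm a + norm b"
proof -
  have "norm ((a, 0::'b) + (0::'a, b)) \<le> norm (a, 0::'b) + norm (0::'a, b)" by (rule norm_triangle_ineq)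
  then show ?thesis by (simp add: norm_Pair)
qed

lemma key_analytic:
  fixes \<mu> :: "'e::banach \<times> 'e \<Rightarrow> 'e"
  assumes sm: "smooth_on \<Omega> \<mu>" and p0: "(p0, p0) \<in> \<Omega>"
    and S: "open S" "p0 \<in> S" "\<And>u. u \<in> S \<Longrightarrow> \<mu> (u, p0) = u \<and> \<mu> (p0, u) = u"
    and eps: "\<epsilon> > 0"
  shows "\<exists>r>0. \<forall>u v u' v'. norm (u - p0) < r \<and> norm (v - p0) < r \<and> norm (u' - p0) < r \<and> norm (v' - p0) < r
     \<longrightarrow> norm (\<mu> (u, v) - \<mu> (u', v') - ((u - u') + (v - v'))) \<le> \<epsilon> * (norm (u - u') + norm (v - v'))"
proof -
  obtain D :: "nat \<Rightarrow> 'e \<times> 'e \<Rightarrow> (nat \<Rightarrow> 'e \<times> 'e) \<Rightarrow> 'e" where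
    oO: "open \<Omega>" and
    D0: "\<forall>x\<in>\<Omega>. \<forall>h. D 0 x h = \<mu> x" and
    Dd: "\<forall>k. \<forall>x\<in>\<Omega>. \<forall>h. ((\<lambda>y. D k y h) has_derivative (\<lambda>v. D (Suc k) x (h(k := v)))) (at x)" and
    Dc: "\<forall>k. \<forall>x\<in>\<Omega>. \<forall>e>0. \<exists>\<delta>>0. \<forall>y\<in>\<Omega>. dist y x < \<delta> \<longrightarrow>
          (\<forall>h. (\<forall>i<k. norm (h i) \<le> 1) \<longrightarrow> norm (D k y h - D k x h) \<le> e)"
    using sm unfolding smooth_on_def by blast
  define L where "L x v = D 1 x ((\<lambda>_. 0)(0 := v))" for x v
  define q where "q = (p0, p0)"
  have der: "(\<mu> has_derivative L x) (at x)" if "x \<in> \<Omega>" for x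
  proof -
    have "((\<lambda>y. D 0 y (\<lambda>_. 0)) has_derivative (\<lambda>v. D (Suc 0) x ((\<lambda>_. 0)(0 := v)))) (at x)"
      using Dd that by blast
    then have "(\<mu> has_derivative (\<lambda>v. D (Suc 0) x ((\<lambda>_. 0)(0 := v)))) (at x)"
      by (rule has_derivative_transform_within_open[OF _ oO that]) (use D0 in auto)
    then show ?thesis unfolding L_def by simp
  qed
  have bl: "bounded_linear (L x)" if "x \<in> \<Omega>" for x
    using der[OF that] has_derivative_bounded_linear by blast
  have Lq1: "L q (a, 0) = a" for a
  proof -
    have "((\<lambda>u. \<mu> (u, p0)) has_derivative (\<lambda>a. L q (a, 0))) (at p0)"
    proof -
      have pd: "((\<lambda>u. (u, p0)) has_derivative (\<lambda>a. (a, 0))) (at p0)"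
        by (auto intro!: derivative_eq_intros)
      show ?thesis using has_derivative_compose[OF pd, of \<mu> "L q"] der[of q] p0 unfolding q_def by simp
    qed
    then have "((\<lambda>u. u) has_derivative (\<lambda>a. L q (a, 0))) (at p0)"
      by (rule has_derivative_transform_within_open[OF _ S(1) S(2)]) (use S(3) in auto)
    then have "(\<lambda>a. L q (a, 0)) = (\<lambda>h. h)"
      using has_derivative_unique has_derivative_ident by blast
    then show ?thesis by metis
  qed
  have Lq2: "L q (0, b) = b" for b
  proof -
    have "((\<lambda>u. \<mu> (p0, u)) has_derivative (\<lambda>a. L q (0, a))) (at p0)"
    proof -
      have pd: "((\<lambda>u. (p0, u)) has_derivative (\<lambda>a. (0, a))) (at p0)"
        by (auto intro!: derivative_eq_intros)
      show ?thesis using has_derivative_compose[OF pd, of \<mu> "L q"] der[of q] p0 unfolding q_def by simp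
    qed
    then have "((\<lambda>u. u) has_derivative (\<lambda>a. L q (0, a))) (at p0)"
      by (rule has_derivative_transform_within_open[OF _ S(1) S(2)]) (use S(3) in auto)
    then have "(\<lambda>a. L q (0, a)) = (\<lambda>h. h)"
      using has_derivative_unique has_derivative_ident by blast
    then show ?thesis by metis
  qed
  have Lq: "L q (a, b) = a + b" for a b
  proof -
    have "L q ((a, 0) + (0, b)) = L q (a, 0) + L q (0, b)"
      using linear_add[OF bounded_linear.linear[OF bl[of q]], of "(a, 0)" "(0, b)"] p0 by (simp add: q_def)
    then show ?thesis by (simp add: Lq1 Lq2)
  qed
  obtain \<delta> where \<delta>: "\<delta> > 0" "\<forall>y\<in>\<Omega>. dist y q < \<delta> \<longrightarrow>
          (\<forall>h. (\<forall>i<1. norm (h i) \<le> 1) \<longrightarrow> norm (D 1 y h - D 1 q h) \<le> \<epsilon>)"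
    using Dc eps p0 unfolding q_def by blast
  obtain r0 where r0: "r0 > 0" "ball q r0 \<subseteq> \<Omega>" using oO p0 open_contains_ball unfolding q_def by blast
  define r1 where "r1 = min r0 \<delta>"
  have r1: "r1 > 0" using r0 \<delta> unfolding r1_def by auto
  define B where "B = ball q r1"
  have BO: "B \<subseteq> \<Omega>" using r0 unfolding B_def r1_def by auto
  have onB: "onorm (\<lambda>v. L y v - L q v) \<le> \<epsilon>" if y: "y \<in> B" for y
  proof (rule onorm_bound)
    show "0 \<le> \<epsilon>" using eps by simp
    fix v :: "'e \<times> 'e"
    have yO: "y \<in> \<Omega>" using y BO by auto
    have qO: "q \<in> \<Omega>" using p0 unfolding q_def by simp
    have dy: "dist y q < \<delta>" using y unfolding B_def r1_def by (auto simp: dist_commute)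
    show "norm (L y v - L q v) \<le> \<epsilon> * norm v"
    proof (cases "v = 0")
      case True
      then show ?thesis using bl[OF yO] bl[OF qO] by (simp add: linear_simps)
    next
      case False
      define w where "w = inverse (norm v) *\<^sub>R v"
      have nw: "norm w = 1" using False unfolding w_def by simp
      have vw: "v = norm v *\<^sub>R w" using False unfolding w_def by simp
      have "norm (L y w - L q w) \<le> \<epsilon>"
        using \<delta>(2) yO dy nw unfolding L_def by (auto)
      moreover have "L y v - L q v = norm v *\<^sub>R (L y w - L q w)"
        by (subst vw, subst vw) (simp add: linear_cmul[OF bounded_linear.linear[OF bl[OF yO]]] linear_cmul[OF bounded_linear.linear[OF bl[OF qO]]] scaleR_diff_right)
      ultimately show ?thesis
        by (simp add: mult.commute[of \<epsilon>] mult_left_mono)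
    qed
  qed
  have bnd: "norm ((\<mu> w - L q w) - (\<mu> w' - L q w')) \<le> \<epsilon> * norm (w - w')" if "w \<in> B" "w' \<in> B" for w w'
  proof (rule differentiable_bound[where f = "\<lambda>w. \<mu> w - L q w" and f' = "\<lambda>y v. L y v - L q v" and S = B])
    show "convex B" unfolding B_def by simp
    fix x assume x: "x \<in> B"
    have "((\<lambda>w. \<mu> w - L q w) has_derivative (\<lambda>v. L x v - L q v)) (at x)"
      using der[of x] x BO bounded_linear_imp_has_derivative[OF bl[of q]] p0
      unfolding q_def by (auto intro: has_derivative_diff)
    then show "((\<lambda>w. \<mu> w - L q w) has_derivative (\<lambda>v. L x v - L q v)) (at x within B)"
      by (rule has_derivative_at_withinI)
    show "onorm (\<lambda>v. L x v - L q v) \<le> \<epsilon>" using onB x .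
  qed (use that in auto)
  show ?thesis
  proof (intro exI[of _ "r1/2"] conjI allI impI)
    show "0 < r1 / 2" using r1 by simp
    fix u v u' v' assume a: "norm (u - p0) < r1 / 2 \<and> norm (v - p0) < r1 / 2 \<and> norm (u' - p0) < r1 / 2 \<and> norm (v' - p0) < r1 / 2"
    have inB: "(a, b) \<in> B" if "norm (a - p0) < r1/2" "norm (b - p0) < r1/2" for a b
    proof -
      have "dist q (a, b) = norm ((p0 - a, p0 - b))" unfolding q_def by (simp add: dist_norm)
      also have "\<dots> \<le> norm (p0 - a) + norm (p0 - b)" by (rule norm_pair_le)
      also have "\<dots> < r1" using that by (simp add: norm_minus_commute)
      finally show ?thesis unfolding B_def by simp
    qed
    have "norm ((\<mu> (u, v) - L q (u, v)) - (\<mu> (u', v') - L q (u', v'))) \<le> \<epsilon> * norm ((u, v) - (u', v'))"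
      using bnd inB a by blast
    also have "\<dots> \<le> \<epsilon> * (norm (u - u') + norm (v - v'))"
      using eps norm_pair_le[of "u - u'" "v - v'"] by (intro mult_left_mono) auto
    finally show "norm (\<mu> (u, v) - \<mu> (u', v') - ((u - u') + (v - v'))) \<le> \<epsilon> * (norm (u - u') + norm (v - v'))"
      by (simp add: Lq algebra_simps)
  qed
qed




lemma ell1_mult_sing: "ell1_mult (sing n p) (sing n q) = sing n (heis_mult p q)"
  by (rule ext) (simp add: ell1_mult_def sing_def)
lemma ell1_mult_e0[simp]: "ell1_mult e0 q = q" "ell1_mult q e0 = q"
  by (rule ext, simp add: ell1_mult_def e0_def)+
lemma sing_one: "sing n heis_one = e0" by (rule ext) (simp add: sing_def e0_def)

lemma norm_aux: "norm (b - c - a) \<le> t \<Longrightarrow> norm a \<le> norm (b - c) + t"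
  for a b c :: "'a::real_normed_vector"
proof -
  assume h: "norm (b - c - a) \<le> t"
  have "norm a = norm ((b - c) - (b - c - a))" by simp
  also have "\<dots> \<le> norm (b - c) + norm (b - c - a)" by (rule norm_triangle_ineq4)
  finally show ?thesis using h by simp
qed

context fixes d :: "heis \<Rightarrow> heis \<Rightarrow> real" assumes hd: "homogeneous_distance d"
begin

lemma d_dil_one: "d (heis_dil s p) heis_one = \<bar>s\<bar> * d p heis_one"
proof -
  have "heis_dil s heis_one = heis_one" by (simp add: heis_dil_def heis_one_def)
  then show ?thesis using d_dil[OF hd, of s p heis_one] by simp
qed

lemma chart_cont:
  fixes \<phi> :: "(nat \<Rightarrow> heis) \<Rightarrow> 'e::real_normed_vector"
  assumes opU: "openin (ell1_topology d) U" and hom: "homeomorphic_map (subtopology (ell1_topology d) U) (top_of_set (\<phi> ` U)) \<phi>"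
    and eU: "e0 \<in> U" and r: "r > 0"
  shows "\<exists>R>0. \<forall>q\<in>ell1 d. ell1_dist d e0 q < R \<longrightarrow> q \<in> U \<and> norm (\<phi> q - \<phi> e0) < r"
proof -
  have Usub: "U \<subseteq> ell1 d" using opU openin_subset topspace_ell1[OF hd] by blast
  have top: "topspace (subtopology (ell1_topology d) U) = U" using Usub topspace_ell1[OF hd] by auto
  have "openin (top_of_set (\<phi> ` U)) (\<phi> ` U \<inter> ball (\<phi> e0) r)" by auto
  then have "openin (subtopology (ell1_topology d) U) {x \<in> topspace (subtopology (ell1_topology d) U). \<phi> x \<in> \<phi> ` U \<inter> ball (\<phi> e0) r}"
    by (rule openin_continuous_map_preimage[OF homeomorphic_imp_continuous_map[OF hom]])
  then have "openin (subtopology (ell1_topology d) U) {x \<in> U. \<phi> x \<in> \<phi> ` U \<inter> ball (\<phi> e0) r}"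
    by (simp only: top)
  then have "openin (ell1_topology d) {x \<in> U. \<phi> x \<in> \<phi> ` U \<inter> ball (\<phi> e0) r}"
    using openin_open_subtopology[OF opU] by simp
  then have "P1 d {x \<in> U. \<phi> x \<in> \<phi> ` U \<inter> ball (\<phi> e0) r}" using openin_ell1[OF hd] by simp
  moreover have "e0 \<in> {x \<in> U. \<phi> x \<in> \<phi> ` U \<inter> ball (\<phi> e0) r}" using eU r by auto
  ultimately obtain R where "R > 0" "\<forall>y\<in>ell1 d. ell1_dist d e0 y < R \<longrightarrow> y \<in> {x \<in> U. \<phi> x \<in> \<phi> ` U \<inter> ball (\<phi> e0) r}"
    unfolding P1_def[OF hd] by blast
  then show ?thesis
  proof (intro exI[of _ R] conjI ballI impI)
    fix q assume "q \<in> ell1 d" "ell1_dist d e0 q < R"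
    then have q: "q \<in> {x \<in> U. \<phi> x \<in> \<phi> ` U \<inter> ball (\<phi> e0) r}" using \<open>\<forall>y\<in>ell1 d. _\<close> by blast
    then show "q \<in> U" by blast
    have "dist (\<phi> e0) (\<phi> q) < r" using q by simp
    then show "norm (\<phi> q - \<phi> e0) < r" by (simp add: dist_norm norm_minus_commute)
  qed simp
qed

lemma chart_inv:
  fixes \<phi> :: "(nat \<Rightarrow> heis) \<Rightarrow> 'e::real_normed_vector"
  assumes opU: "openin (ell1_topology d) U" and hom: "homeomorphic_map (subtopology (ell1_topology d) U) (top_of_set (\<phi> ` U)) \<phi>"
    and opI: "open (\<phi> ` U)" and eU: "e0 \<in> U" and \<rho>: "\<rho> > 0"
  shows "\<exists>\<eta>>0. \<forall>q\<in>U. norm (\<phi> q - \<phi> e0) < \<eta> \<longrightarrow> ell1_dist d e0 q < \<rho>"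
proof -
  have Usub: "U \<subseteq> ell1 d" using opU openin_subset topspace_ell1[OF hd] by blast
  have top: "topspace (subtopology (ell1_topology d) U) = U" using Usub topspace_ell1[OF hd] by auto
  define W where "W = U \<inter> {q \<in> ell1 d. ell1_dist d e0 q < \<rho>}"
  have o1: "openin (ell1_topology d) {q \<in> ell1 d. ell1_dist d e0 q < \<rho>}"
    using openin_ell1[OF hd] ball_open[OF hd e0_in[OF hd]] by simp
  have oW: "openin (ell1_topology d) W" unfolding W_def by (rule openin_Int[OF opU o1])
  have WU: "W \<subseteq> U" unfolding W_def by blast
  have "openin (subtopology (ell1_topology d) U) W" using openin_open_subtopology[OF opU] oW WU by simp
  moreover have "W \<subseteq> topspace (subtopology (ell1_topology d) U)" using WU top by simp
  ultimately have "openin (top_of_set (\<phi> ` U)) (\<phi> ` W)"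
    using homeomorphic_map_openness[OF hom] by blast
  then have oWi: "open (\<phi> ` W)" by (rule openin_open_trans[OF _ opI])
  have "ell1_dist d e0 e0 = 0" by (simp add: ell1_dist_def d_zero[OF hd])
  then have "e0 \<in> W" unfolding W_def using eU e0_in[OF hd] \<rho> by simp
  then have "\<phi> e0 \<in> \<phi> ` W" by (rule imageI)
  then obtain \<eta> where "\<eta> > 0" "ball (\<phi> e0) \<eta> \<subseteq> \<phi> ` W" using oWi open_contains_ball by metis
  have inj: "inj_on \<phi> U" using homeomorphic_imp_injective_map[OF hom] top by simp
  show ?thesis
  proof (intro exI[of _ \<eta>] conjI ballI impI)
    fix q assume q: "q \<in> U" "norm (\<phi> q - \<phi> e0) < \<eta>"
    then have "\<phi> q \<in> ball (\<phi> e0) \<eta>" by (simp add: dist_norm norm_minus_commute)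
    then have "\<phi> q \<in> \<phi> ` W" using \<open>ball (\<phi> e0) \<eta> \<subseteq> \<phi> ` W\<close> by blast
    then obtain w where w: "w \<in> W" "\<phi> q = \<phi> w" by blast
    have "w \<in> U" using w unfolding W_def by blast
    then have "q = w" using inj q(1) w(2) inj_on_eq_iff by metis
    then show "ell1_dist d e0 q < \<rho>" using w unfolding W_def by blast
  qed (rule \<open>\<eta> > 0\<close>)
qed

end



context fixes d :: "heis \<Rightarrow> heis \<Rightarrow> real" assumes hd: "homogeneous_distance d"
begin

lemma main_false: "\<not> banach_lie_group (ell1_topology d) ell1_mult ell1_inv TYPE('e::banach)"
proof
  assume "banach_lie_group (ell1_topology d) ell1_mult ell1_inv TYPE('e::banach)"
  note B = this[unfolded banach_lie_group_def]
  obtain A :: "((nat \<Rightarrow> heis) set \<times> ((nat \<Rightarrow> heis) \<Rightarrow> 'e)) set" where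
    A1: "\<forall>(U, \<phi>)\<in>A. openin (ell1_topology d) U \<and> open (\<phi> ` U) \<and>
          homeomorphic_map (subtopology (ell1_topology d) U) (top_of_set (\<phi> ` U)) \<phi>" and
    A2: "topspace (ell1_topology d) \<subseteq> \<Union>(fst ` A)" and
    A4: "\<forall>(U, \<phi>)\<in>A. \<forall>(V, \<psi>)\<in>A. \<forall>(W, \<theta>)\<in>A.
         smooth_on {p \<in> \<phi> ` U \<times> \<psi> ` V. ell1_mult (inv_into U \<phi> (fst p)) (inv_into V \<psi> (snd p)) \<in> W}
           (\<lambda>p. \<theta> (ell1_mult (inv_into U \<phi> (fst p)) (inv_into V \<psi> (snd p))))"
    using B by blast
  have "e0 \<in> topspace (ell1_topology d)" using topspace_ell1[OF hd] e0_in[OF hd] by simp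
  then obtain X where XA: "X \<in> A" and eX: "e0 \<in> fst X" using A2 by blast
  obtain U \<phi> where Xeq: "X = (U, \<phi>)" by (cases X)
  have UA: "(U, \<phi>) \<in> A" and eU: "e0 \<in> U" using XA eX Xeq by auto
  have opU: "openin (ell1_topology d) U" and opI: "open (\<phi> ` U)"
    and hom: "homeomorphic_map (subtopology (ell1_topology d) U) (top_of_set (\<phi> ` U)) \<phi>"
    using bspec[OF A1 UA] by simp_all
  define \<Phi> where "\<Phi> = inv_into U \<phi>"
  define \<Omega> where "\<Omega> = {p \<in> \<phi> ` U \<times> \<phi> ` U. ell1_mult (\<Phi> (fst p)) (\<Phi> (snd p)) \<in> U}"
  define \<mu> where "\<mu> = (\<lambda>p. \<phi> (ell1_mult (\<Phi> (fst p)) (\<Phi> (snd p))))"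
  have sm: "smooth_on \<Omega> \<mu>"
  proof -
    have h1: "\<forall>(V, \<psi>)\<in>A. \<forall>(W, \<theta>)\<in>A.
         smooth_on {p \<in> \<phi> ` U \<times> \<psi> ` V. ell1_mult (inv_into U \<phi> (fst p)) (inv_into V \<psi> (snd p)) \<in> W}
           (\<lambda>p. \<theta> (ell1_mult (inv_into U \<phi> (fst p)) (inv_into V \<psi> (snd p))))"
      using bspec[OF A4 UA] by simp
    have h2: "\<forall>(W, \<theta>)\<in>A.
         smooth_on {p \<in> \<phi> ` U \<times> \<phi> ` U. ell1_mult (inv_into U \<phi> (fst p)) (inv_into U \<phi> (snd p)) \<in> W}
           (\<lambda>p. \<theta> (ell1_mult (inv_into U \<phi> (fst p)) (inv_into U \<phi> (snd p))))"
      using bspec[OF h1 UA] by simp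
    show ?thesis using bspec[OF h2 UA] unfolding \<Omega>_def \<mu>_def \<Phi>_def by simp
  qed
  have Usub: "U \<subseteq> ell1 d" using opU openin_subset topspace_ell1[OF hd] by blast
  have top: "topspace (subtopology (ell1_topology d) U) = U" using Usub topspace_ell1[OF hd] by auto
  have inj: "inj_on \<phi> U" using homeomorphic_imp_injective_map[OF hom] top by simp
  have PhiF: "\<Phi> (\<phi> a) = a" if "a \<in> U" for a unfolding \<Phi>_def using inj that by simp
  have muF: "\<mu> (\<phi> a, \<phi> b) = \<phi> (ell1_mult a b)" if "a \<in> U" "b \<in> U" for a b
    unfolding \<mu>_def using PhiF that by simp
  define p0 where "p0 = \<phi> e0"
  have p0O: "(p0, p0) \<in> \<Omega>" unfolding \<Omega>_def p0_def using eU PhiF by simp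
  have Sid: "\<mu> (u, p0) = u \<and> \<mu> (p0, u) = u" if "u \<in> \<phi> ` U" for u
    using that muF eU unfolding p0_def by auto
  obtain r where r: "r > 0" and
    K: "\<forall>u v u' v'. norm (u - p0) < r \<and> norm (v - p0) < r \<and> norm (u' - p0) < r \<and> norm (v' - p0) < r
     \<longrightarrow> norm (\<mu> (u, v) - \<mu> (u', v') - ((u - u') + (v - v'))) \<le> (1/8) * (norm (u - u') + norm (v - v'))"
    using key_analytic[OF sm p0O opI _ Sid, of "1/8"] eU unfolding p0_def by auto
  obtain R where R: "R > 0" and
    small: "\<forall>q\<in>ell1 d. ell1_dist d e0 q < R \<longrightarrow> q \<in> U \<and> norm (\<phi> q - \<phi> e0) < r"
    using chart_cont[OF hd opU hom eU r] by blast
  have smallq: "q \<in> U \<and> norm (\<phi> q - p0) < r" if "q \<in> ell1 d" "ell1_dist d e0 q < R" for q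
    using small that unfolding p0_def by blast
  have Kp: "norm (\<mu> (u, v) - \<mu> (u', v') - ((u - u') + (v - v'))) \<le> (1/8) * (norm (u - u') + norm (v - v'))"
    if "norm (u - p0) < r" "norm (v - p0) < r" "norm (u' - p0) < r" "norm (v' - p0) < r" for u v u' v'
    using K that by blast
  have p0n: "norm (p0 - p0) < r" using r by simp
  have mu_p0: "\<mu> (p0, p0) = p0" using Sid eU unfolding p0_def by blast
  define c1 where "c1 = d (1, 0, 0) heis_one"
  define c2 where "c2 = d (0, 1, 0) heis_one"
  define \<kappa> where "\<kappa> = d (0, 0, 1) heis_one"
  have c1: "c1 \<ge> 0" "c2 \<ge> 0" unfolding c1_def c2_def by (simp_all add: d_nonneg[OF hd])
  have \<kappa>: "\<kappa> > 0"
  proof -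
    have "(0::real, 0::real, 1::real) \<noteq> heis_one" by (simp add: heis_one_def)
    then have "\<kappa> \<noteq> 0" unfolding \<kappa>_def using d_eq0[OF hd] by blast
    then show ?thesis using d_nonneg[OF hd] unfolding \<kappa>_def by (metis less_eq_real_def)
  qed
  define M where "M = c1 + c2 + \<kappa> + 1"
  have M: "M > 0" unfolding M_def using c1 \<kappa> by simp
  define \<delta> where "\<delta> = R / (2 * M)"
  have \<delta>: "\<delta> > 0" unfolding \<delta>_def using R M by simp
  have \<delta>M: "\<delta> * M < R" unfolding \<delta>_def using R M by (simp add: field_simps)
  have \<delta>12: "\<delta> * (c1 + c2) < R" and \<delta>\<kappa>: "\<delta> * \<kappa> < R"
  proof -
    have "\<delta> * (c1 + c2) \<le> \<delta> * M" using \<delta> \<kappa> unfolding M_def by (intro mult_left_mono) auto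
    then show "\<delta> * (c1 + c2) < R" using \<delta>M by simp
    have "\<delta> * \<kappa> \<le> \<delta> * M" using \<delta> c1 unfolding M_def by (intro mult_left_mono) auto
    then show "\<delta> * \<kappa> < R" using \<delta>M by simp
  qed
  define \<rho> where "\<rho> = \<delta> * \<kappa>"
  have \<rho>: "\<rho> > 0" unfolding \<rho>_def using \<delta> \<kappa> by simp
  obtain \<eta> where \<eta>: "\<eta> > 0" and inv: "\<forall>q\<in>U. norm (\<phi> q - p0) < \<eta> \<longrightarrow> ell1_dist d e0 q < \<rho>"
    using chart_inv[OF hd opU hom opI eU \<rho>] unfolding p0_def by blast
  obtain j where j: "(32/49::real) ^ j < \<eta> / (2 * r)"
    using real_arch_pow_inv[of "\<eta> / (2 * r)" "32/49"] \<eta> r by auto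
  define xh :: heis where "xh = (\<delta>, 0, 0)"
  define yh :: "nat \<Rightarrow> heis" where "yh i = (0, \<delta> / 2 ^ i, 0)" for i
  define \<tau> where "\<tau> = (\<delta> / 2 ^ j) ^ 2"
  define gh :: heis where "gh = (0, 0, \<tau>)"
  define G :: "nat \<Rightarrow> nat \<Rightarrow> heis" where "G k = (\<lambda>m. if m < k then gh else heis_one)" for k
  have dxh: "d xh heis_one = \<delta> * c1"
  proof -
    have "xh = heis_dil \<delta> (1, 0, 0)" unfolding xh_def heis_dil_def by simp
    then show ?thesis using d_dil_one[OF hd] \<delta> unfolding c1_def by simp
  qed
  have dyh: "d (yh i) heis_one \<le> \<delta> * c2" for i
  proof -
    have "yh i = heis_dil (\<delta> / 2 ^ i) (0, 1, 0)" unfolding yh_def heis_dil_def by simp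
    then have "d (yh i) heis_one = (\<delta> / 2 ^ i) * c2" using d_dil_one[OF hd] \<delta> unfolding c2_def by simp
    also have "\<dots> \<le> \<delta> * c2" using \<delta> c1 by (intro mult_right_mono) (auto simp: field_simps)
    finally show ?thesis .
  qed
  have dgh: "d heis_one gh = (\<delta> / 2 ^ j) * \<kappa>"
  proof -
    have "gh = heis_dil (\<delta> / 2 ^ j) (0, 0, 1)" unfolding gh_def \<tau>_def heis_dil_def by simp
    then show ?thesis using d_dil_one[OF hd] \<delta> d_sym[OF hd] unfolding \<kappa>_def by simp
  qed
  have dgh2: "d gh heis_one \<le> \<delta> * \<kappa>"
  proof -
    have "d gh heis_one = (\<delta> / 2 ^ j) * \<kappa>" using dgh d_sym[OF hd] by metis
    also have "\<dots> \<le> \<delta> * \<kappa>" using \<delta> \<kappa> by (intro mult_right_mono) (auto simp: field_simps)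
    finally show ?thesis .
  qed
  have Gdist: "G k \<in> ell1 d \<and> ell1_dist d e0 (G k) = real k * ((\<delta> / 2 ^ j) * \<kappa>)" for k
  proof -
    have h: "\<And>m. m \<ge> k \<Longrightarrow> G k m = heis_one" unfolding G_def by simp
    have "ell1_dist d e0 (G k) = (\<Sum>m<k. d heis_one (G k m))" by (rule ell1_fin(2)[OF hd h])
    also have "\<dots> = (\<Sum>m<k. d heis_one gh)" unfolding G_def by simp
    finally show ?thesis using ell1_fin(1)[OF hd h] dgh by simp
  qed
  have sm_sing: "\<phi> (sing n p) = \<phi> (sing n p) \<and> sing n p \<in> U \<and> norm (\<phi> (sing n p) - p0) < r"
    if "d p heis_one < R" for n p
    using smallq[OF sing_in[OF hd] ] sing_dist[OF hd] that by simp
  have smx: "sing n xh \<in> U \<and> norm (\<phi> (sing n xh) - p0) < r" for n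
  proof -
    have "\<delta> * c1 \<le> \<delta> * (c1 + c2)" using \<delta> c1 by (intro mult_left_mono) auto
    then have "\<delta> * c1 < R" using \<delta>12 by simp
    then show ?thesis using sm_sing[of xh n] dxh by simp
  qed
  have smy: "sing n (yh i) \<in> U \<and> norm (\<phi> (sing n (yh i)) - p0) < r" for n i
  proof -
    have "\<delta> * c2 \<le> \<delta> * (c1 + c2)" using \<delta> c1 by (intro mult_left_mono) auto
    then have "d (yh i) heis_one < R" using \<delta>12 dyh[of i] by simp
    then show ?thesis using sm_sing[of "yh i" n] by simp
  qed
  have smg: "sing n gh \<in> U \<and> norm (\<phi> (sing n gh) - p0) < r" for n
    using sm_sing[of gh n] dgh2 \<delta>\<kappa> by simp
  have smxy: "sing n (heis_mult p q) \<in> U \<and> norm (\<phi> (sing n (heis_mult p q)) - p0) < r"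
    if "p = xh \<and> q = yh i \<or> p = yh i \<and> q = xh" for n i p q
  proof -
    have "d (heis_mult p q) heis_one \<le> d p heis_one + d q heis_one" by (rule d_mult_le[OF hd])
    also have "\<dots> \<le> \<delta> * c1 + \<delta> * c2" using that dxh dyh[of i] by auto
    finally show ?thesis using sm_sing \<delta>12 by (simp add: algebra_simps)
  qed
  have smG: "G k \<in> U \<and> norm (\<phi> (G k) - p0) < r" if "k \<le> 2 ^ j" for k
  proof -
    have "real k * ((\<delta> / 2 ^ j) * \<kappa>) \<le> 2 ^ j * ((\<delta> / 2 ^ j) * \<kappa>)"
      using that \<delta> \<kappa> by (intro mult_right_mono) auto
    also have "\<dots> = \<delta> * \<kappa>" by simp
    finally show ?thesis using smallq Gdist[of k] \<delta>\<kappa> by simp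
  qed
  have sq: "norm (\<phi> (sing n (yh (Suc i))) - p0) \<le> (4/7) * norm (\<phi> (sing n (yh i)) - p0)" for n i
  proof -
    let ?a = "\<phi> (sing n (yh (Suc i)))" and ?b = "\<phi> (sing n (yh i))"
    have hm: "heis_mult (yh (Suc i)) (yh (Suc i)) = yh i" unfolding yh_def heis_mult_def by simp
    have "\<mu> (?a, ?a) = ?b" using muF smy ell1_mult_sing hm by metis
    then have "norm (?b - p0 - ((?a - p0) + (?a - p0))) \<le> (1/8) * (norm (?a - p0) + norm (?a - p0))"
      using Kp[of ?a ?a p0 p0] smy p0n mu_p0 by simp
    then have "norm ((?a - p0) + (?a - p0)) \<le> norm (?b - p0) + (1/8) * (norm (?a - p0) + norm (?a - p0))"
      by (rule norm_aux)
    moreover have "norm ((?a - p0) + (?a - p0)) = 2 * norm (?a - p0)"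
      by (metis mult_2 norm_scaleR scaleR_2 abs_numeral real_norm_def norm_numeral)
    ultimately show ?thesis by simp
  qed
  have chain: "norm (\<phi> (sing n (yh i)) - p0) \<le> (4/7) ^ i * r" for n i
  proof (induction i)
    case 0 then show ?case using smy[of n 0] by simp
  next
    case (Suc i)
    have "norm (\<phi> (sing n (yh (Suc i))) - p0) \<le> (4/7) * norm (\<phi> (sing n (yh i)) - p0)" by (rule sq)
    also have "\<dots> \<le> (4/7) * ((4/7) ^ i * r)" using Suc by simp
    finally show ?case by simp
  qed
  have comm: "norm (\<phi> (sing n gh) - p0) \<le> (4/7) ^ (2 * j) * r" for n
  proof -
    let ?X = "sing n xh" and ?Y = "sing n (yh (2 * j))" and ?g = "sing n gh"
    let ?XY = "sing n (heis_mult xh (yh (2 * j)))" and ?YX = "sing n (heis_mult (yh (2 * j)) xh)"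
    let ?u = "\<phi> ?X" and ?v = "\<phi> ?Y" and ?A = "\<phi> ?XY" and ?B = "\<phi> ?YX" and ?a = "\<phi> ?g"
    have hc: "heis_mult gh (heis_mult (yh (2 * j)) xh) = heis_mult xh (yh (2 * j))"
    proof -
      have "(2::real) ^ (2 * j) = (2 ^ j) ^ 2" by (simp add: power_mult mult.commute)
      then have "\<tau> = \<delta> * (\<delta> / 2 ^ (2 * j))" unfolding \<tau>_def by (simp add: power2_eq_square)
      then show ?thesis unfolding gh_def xh_def yh_def heis_mult_def by (simp add: field_simps)
    qed
    have uU: "?X \<in> U" "norm (?u - p0) < r" using smx by auto
    have vU: "?Y \<in> U" "norm (?v - p0) < r" using smy by auto
    have AU: "?XY \<in> U" "norm (?A - p0) < r" using smxy[of xh "yh (2*j)" "2*j" n] by auto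
    have BU: "?YX \<in> U" "norm (?B - p0) < r" using smxy[of "yh (2*j)" xh "2*j" n] by auto
    have aU: "?g \<in> U" "norm (?a - p0) < r" using smg by auto
    have muA: "\<mu> (?u, ?v) = ?A" using muF[OF uU(1) vU(1)] ell1_mult_sing by simp
    have muB: "\<mu> (?v, ?u) = ?B" using muF[OF vU(1) uU(1)] ell1_mult_sing by simp
    have muC: "\<mu> (?a, ?B) = ?A" using muF[OF aU(1) BU(1)] ell1_mult_sing hc by simp
    have mu1: "\<mu> (?u, p0) = ?u" "\<mu> (p0, ?u) = ?u" "\<mu> (p0, ?B) = ?B" using Sid uU BU by auto
    have e1: "norm (?A - ?u - (?v - p0)) \<le> (1/8) * norm (?v - p0)"
      using Kp[of ?u ?v ?u p0] uU vU p0n muA mu1 by simp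
    have e2: "norm (?B - ?u - (?v - p0)) \<le> (1/8) * norm (?v - p0)"
      using Kp[of ?v ?u p0 ?u] uU vU p0n muB mu1 by simp
    have e3: "norm (?A - ?B - (?a - p0)) \<le> (1/8) * norm (?a - p0)"
      using Kp[of ?a ?B p0 ?B] aU BU p0n muC mu1 by simp
    have "norm (?A - ?B) = norm ((?A - ?u - (?v - p0)) - (?B - ?u - (?v - p0)))" by (simp add: algebra_simps)
    also have "\<dots> \<le> norm (?A - ?u - (?v - p0)) + norm (?B - ?u - (?v - p0))" by (rule norm_triangle_ineq4)
    finally have "norm (?A - ?B) \<le> (1/4) * norm (?v - p0)" using e1 e2 by simp
    moreover have "norm (?a - p0) \<le> norm (?A - ?B) + (1/8) * norm (?a - p0)" using e3 by (rule norm_aux)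
    ultimately have "norm (?a - p0) \<le> norm (?v - p0)" using norm_ge_zero[of "?v - p0"] by linarith
    also have "\<dots> \<le> (4/7) ^ (2 * j) * r" by (rule chain)
    finally show ?thesis .
  qed
  define bnd where "bnd = (4/7::real) ^ (2 * j) * r"
  have prod: "norm (\<phi> (G k) - p0) \<le> real k * ((9/8) * bnd)" if "k \<le> 2 ^ j" for k
    using that
  proof (induction k)
    case 0
    have "G 0 = e0" unfolding G_def e0_def by simp
    then show ?case unfolding p0_def by simp
  next
    case (Suc k)
    have kj: "k \<le> 2 ^ j" using Suc.prems by simp
    let ?u = "\<phi> (G k)" and ?v = "\<phi> (sing k gh)" and ?w = "\<phi> (G (Suc k))"
    have GS: "ell1_mult (G k) (sing k gh) = G (Suc k)"
      unfolding G_def sing_def ell1_mult_def by (rule ext) simp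
    have uU: "G k \<in> U" "norm (?u - p0) < r" using smG[OF kj] by auto
    have vU: "sing k gh \<in> U" "norm (?v - p0) < r" using smg by auto
    have muW: "\<mu> (?u, ?v) = ?w" using muF[OF uU(1) vU(1)] GS by simp
    have mu1: "\<mu> (?u, p0) = ?u" using Sid uU by auto
    have e1: "norm (?w - ?u - (?v - p0)) \<le> (1/8) * norm (?v - p0)"
      using Kp[of ?u ?v ?u p0] uU vU p0n muW mu1 by simp
    have "norm (?w - p0) = norm ((?u - p0) + (?v - p0) + (?w - ?u - (?v - p0)))" by (simp add: algebra_simps)
    also have "\<dots> \<le> norm (?u - p0) + norm (?v - p0) + norm (?w - ?u - (?v - p0))"
    proof -
      have t1: "norm ((?u - p0) + (?v - p0) + (?w - ?u - (?v - p0))) \<le> norm ((?u - p0) + (?v - p0)) + norm (?w - ?u - (?v - p0))"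
        by (rule norm_triangle_ineq)
      have t2: "norm ((?u - p0) + (?v - p0)) \<le> norm (?u - p0) + norm (?v - p0)" by (rule norm_triangle_ineq)
      from t1 t2 show ?thesis by linarith
    qed
    also have "\<dots> \<le> real k * ((9/8) * bnd) + (9/8) * bnd"
      using Suc.IH[OF kj] e1 comm[of k] unfolding bnd_def by simp
    finally show ?case by (simp add: algebra_simps)
  qed
  have fin: "norm (\<phi> (G (2 ^ j)) - p0) < \<eta>"
  proof -
    have "norm (\<phi> (G (2 ^ j)) - p0) \<le> 2 ^ j * ((9/8) * bnd)" using prod[of "2 ^ j"] by simp
    also have "\<dots> = (9/8) * ((32/49) ^ j * r)"
    proof -
      have p1: "(4/7::real) ^ (2 * j) = ((4/7) ^ 2) ^ j" by (rule power_mult)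
      have p2: "(4/7::real) ^ 2 = 16/49" by (simp add: power2_eq_square)
      have p3: "(2::real) ^ j * (16/49) ^ j = (2 * (16/49)) ^ j" by (rule power_mult_distrib[symmetric])
      have "(2::real) ^ j * (4/7) ^ (2 * j) = (32/49) ^ j" using p1 p2 p3 by simp
      then show ?thesis unfolding bnd_def by (simp add: algebra_simps)
    qed
    also have "\<dots> < (9/8) * ((\<eta> / (2 * r)) * r)"
      by (rule mult_strict_left_mono[OF mult_strict_right_mono[OF j r]]) simp
    also have "\<dots> < \<eta>" using \<eta> r by (simp add: field_simps)
    finally show ?thesis .
  qed
  have "ell1_dist d e0 (G (2 ^ j)) < \<rho>" using inv fin smG[of "2 ^ j"] by simp
  moreover have "ell1_dist d e0 (G (2 ^ j)) = \<rho>" using Gdist[of "2 ^ j"] unfolding \<rho>_def by simp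
  ultimately show False by simp
qed

end


theorem mainTheorem19:
  fixes d :: "heis \<Rightarrow> heis \<Rightarrow> real"
  assumes "homogeneous_distance d"
  shows "\<not> banach_lie_group (ell1_topology d) ell1_mult ell1_inv TYPE('e::banach)"
  using main_false[OF assms] .

end
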